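(* Let \(a,b,c\) be positive integers, \(m\) a positive integer that is not a perfect square, with \(\gcd(am,b^2-c^2m)=1\), and let \(A,B\in\mathbb Z\). Let \((\bar x,\bar y,\bar z,\bar w)\) be the unique element of \(\mathbb Z^4\) with \(0\leq\bar z<am\), \(0\leq\bar w<a\) satisfying \(a\sqrt m(\bar x+\bar y\sqrt m)+(b+c\sqrt m)(\bar z+\bar w\sqrt m)=A+B\sqrt m\). Then the equation \(a\sqrt m(x+y\sqrt m)+(b+c\sqrt m)(z+w\sqrt m)=A+B\sqrt m\) has a solution with \(x,y,z,w\in\mathbb N\) if and only if \(\bar x\geq 0\) and \(\bar y\geq 0\).
   Context: \(\mathbb N\) denotes the set of non-negative integers. (Existence and uniqueness of \((\bar x,\bar y,\bar z,\bar w)\) under the stated hypotheses may be assumed.) *)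

theory Defs
  imports Complex_Main
begin

end

theory Submission
  imports Defs "HOL-Computational_Algebra.Nth_Powers"
begin

lemma irr_aux:
  fixes m :: nat and p q :: int
  assumes ns: "\<not> (\<exists>k::nat. k ^ 2 = m)"
    and eq: "real_of_int p + real_of_int q * sqrt (real m) = 0"
  shows "q = 0"
proof (rule ccontr)
  assume q: "q \<noteq> 0"
  have "real_of_int q * sqrt (real m) = - real_of_int p" using eq by linarith
  hence "(real_of_int q * sqrt (real m))^2 = (real_of_int p)^2" by simp
  hence "(real_of_int q)^2 * real m = (real_of_int p)^2"
    by (simp add: power_mult_distrib)
  hence "real_of_int (q^2 * int m) = real_of_int (p^2)" by simp
  hence "q^2 * int m = p^2" by (metis of_int_eq_iff)
  hence "int ((nat \<bar>q\<bar>)^2 * m) = int ((nat \<bar>p\<bar>)^2)"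
    by (simp add: power2_abs)
  hence e: "(nat \<bar>q\<bar>)^2 * m = (nat \<bar>p\<bar>)^2" by (metis of_nat_eq_iff)
  have "is_nth_power 2 ((nat \<bar>q\<bar>)^2 * m)" unfolding e by simp
  hence "is_nth_power 2 m"
    by (subst (asm) is_nth_power_mult_cancel_left) (use q in auto)
  then obtain y where "m = y^2" by (elim is_nth_powerE)
  thus False using ns by auto
qed

lemma split_eq:
  fixes m :: nat and p q :: int
  assumes ns: "\<not> (\<exists>k::nat. k ^ 2 = m)"
    and eq: "real_of_int p + real_of_int q * sqrt (real m) = real_of_int p' + real_of_int q' * sqrt (real m)"
  shows "p = p' \<and> q = q'"
proof -
  have "real_of_int (p - p') + real_of_int (q - q') * sqrt (real m) = 0"
    using eq by (simp add: algebra_simps)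
  hence "q - q' = 0" by (rule irr_aux[OF ns])
  hence q: "q = q'" by simp
  with eq have "p = p'" by simp
  with q show ?thesis by simp
qed

lemma expand:
  fixes a b c m :: nat and x y z w :: int
  shows "real a * sqrt (real m) * (real_of_int x + real_of_int y * sqrt (real m))
         + (real b + real c * sqrt (real m)) * (real_of_int z + real_of_int w * sqrt (real m))
       = real_of_int (int a * int m * y + int b * z + int c * int m * w)
         + real_of_int (int a * x + int c * z + int b * w) * sqrt (real m)"
proof -
  define r where "r = sqrt (real m)"
  have s: "r * r = real m" unfolding r_def by simp
  have "real a * r * (real_of_int x + real_of_int y * r)
         + (real b + real c * r) * (real_of_int z + real_of_int w * r)
       = real a * real_of_int y * (r * r) + real b * real_of_int z + real c * real_of_int w * (r*r)
         + (real a * real_of_int x + real c * real_of_int z + real b * real_of_int w) * r"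
    by (simp add: algebra_simps)
  also have "\<dots> = real_of_int (int a * int m * y + int b * z + int c * int m * w)
         + real_of_int (int a * x + int c * z + int b * w) * r"
    unfolding s by simp
  finally show ?thesis unfolding r_def .
qed

theorem lemma12:
  fixes a b c m :: nat and A B :: int and xb yb zb wb :: int
  assumes "a > 0" and "b > 0" and "c > 0" and "m > 0"
    and "\<not> (\<exists>k::nat. k ^ 2 = m)"
    and "gcd (int a * int m) (int b ^ 2 - int c ^ 2 * int m) = 1"
    and "0 \<le> zb" and "zb < int a * int m" and "0 \<le> wb" and "wb < int a"
    and "real a * sqrt (real m) * (real_of_int xb + real_of_int yb * sqrt (real m))
         + (real b + real c * sqrt (real m)) * (real_of_int zb + real_of_int wb * sqrt (real m))
         = real_of_int A + real_of_int B * sqrt (real m)"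
  shows "(\<exists>x y z w :: nat.
            real a * sqrt (real m) * (real x + real y * sqrt (real m))
            + (real b + real c * sqrt (real m)) * (real z + real w * sqrt (real m))
            = real_of_int A + real_of_int B * sqrt (real m))
         \<longleftrightarrow> (xb \<ge> 0 \<and> yb \<ge> 0)"
proof -
  note ns = assms(5)
  let ?s = "sqrt (real m)"
  have hb: "int a * int m * yb + int b * zb + int c * int m * wb = A
            \<and> int a * xb + int c * zb + int b * wb = B"
    using split_eq[OF ns] assms(11) unfolding expand by blast
  show ?thesis
  proof
    assume "\<exists>x y z w :: nat.
            real a * ?s * (real x + real y * ?s)
            + (real b + real c * ?s) * (real z + real w * ?s)
            = real_of_int A + real_of_int B * ?s"
    then obtain x y z w :: nat where e0:
      "real a * ?s * (real x + real y * ?s)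
            + (real b + real c * ?s) * (real z + real w * ?s)
            = real_of_int A + real_of_int B * ?s" by blast
    have e: "real a * ?s * (real_of_int (int x) + real_of_int (int y) * ?s)
            + (real b + real c * ?s) * (real_of_int (int z) + real_of_int (int w) * ?s)
            = real_of_int A + real_of_int B * ?s" unfolding of_int_of_nat_eq by (rule e0)
    have h: "int a * int m * int y + int b * int z + int c * int m * int w = A
            \<and> int a * int x + int c * int z + int b * int w = B"
      using split_eq[OF ns] e unfolding expand by blast
    define dx where "dx = int x - xb"
    define dy where "dy = int y - yb"
    define dz where "dz = int z - zb"
    define dw where "dw = int w - wb"
    define N where "N = int b ^ 2 - int c ^ 2 * int m"
    have e1: "int a * int m * dy + int b * dz + int c * int m * dw = 0"
      using h hb unfolding dy_def dz_def dw_def by (simp add: algebra_simps)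
    have e2: "int a * dx + int c * dz + int b * dw = 0"
      using h hb unfolding dx_def dz_def dw_def by (simp add: algebra_simps)
    have "N * dz = int b * (int a * int m * dy + int b * dz + int c * int m * dw)
              - int c * int m * (int a * dx + int c * dz + int b * dw)
              - int a * int m * (int b * dy - int c * dx)"
      unfolding N_def by (simp add: algebra_simps power2_eq_square)
    hence "N * dz = - (int a * int m) * (int b * dy - int c * dx)" using e1 e2 by simp
    hence "int a * int m dvd N * dz" by (metis dvd_triv_left dvd_minus_iff mult_minus_left)
    moreover have "coprime (int a * int m) N" using assms(6) unfolding N_def
      by (simp add: coprime_iff_gcd_eq_1)
    ultimately have "int a * int m dvd dz" using coprime_dvd_mult_right_iff by blast
    then obtain k where k: "dz = int a * int m * k" by (elim dvdE)
    have "N * dw = - int c * (int a * int m * dy + int b * dz + int c * int m * dw)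
              + int b * (int a * dx + int c * dz + int b * dw)
              + int a * (int c * int m * dy - int b * dx)"
      unfolding N_def by (simp add: algebra_simps power2_eq_square)
    hence "N * dw = int a * (int c * int m * dy - int b * dx)" using e1 e2 by simp
    hence "int a dvd N * dw" by simp
    moreover have "coprime (int a) N" using \<open>coprime (int a * int m) N\<close> by simp
    ultimately have "int a dvd dw" using coprime_dvd_mult_right_iff by blast
    then obtain l where l: "dw = int a * l" by (elim dvdE)
    have "int a * dx + int a * (int c * int m * k) + int a * (int b * l) = 0"
      using e2 k l by (simp add: algebra_simps)
    hence "int a * (dx + int c * int m * k + int b * l) = 0" by (simp add: algebra_simps)
    hence dx: "dx = - (int c * int m * k + int b * l)" using assms(1) by simp
    have "int a * int m * dy + int a * int m * (int b * k) + int a * int m * (int c * l) = 0"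
      using e1 k l by (simp add: algebra_simps)
    hence "(int a * int m) * (dy + int b * k + int c * l) = 0" by (simp add: algebra_simps)
    hence dy: "dy = - (int b * k + int c * l)" using assms(1,4) by simp
    have am0: "0 \<le> int a * int m" by simp
    have "k \<ge> 0"
    proof (rule ccontr)
      assume "\<not> k \<ge> 0"
      hence "k \<le> -1" by simp
      from mult_left_mono[OF this am0] have "int a * int m * k \<le> - (int a * int m)" by simp
      moreover have "int z = zb + int a * int m * k" using k unfolding dz_def by linarith
      moreover have "int z \<ge> 0" by simp
      ultimately show False using assms(8) by linarith
    qed
    have "l \<ge> 0"
    proof (rule ccontr)
      assume "\<not> l \<ge> 0"
      hence "l \<le> -1" by simp
      from mult_left_mono[OF this, of "int a"] have "int a * l \<le> - int a" by simp
      moreover have "int w = wb + int a * l" using l unfolding dw_def by linarith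
      moreover have "int w \<ge> 0" by simp
      ultimately show False using assms(10) by linarith
    qed
    have p1: "0 \<le> int c * int m * k" using \<open>k \<ge> 0\<close> by (intro mult_nonneg_nonneg) simp_all
    have p2: "0 \<le> int b * l" using \<open>l \<ge> 0\<close> by (intro mult_nonneg_nonneg) simp_all
    have p3: "0 \<le> int b * k" using \<open>k \<ge> 0\<close> by (intro mult_nonneg_nonneg) simp_all
    have p4: "0 \<le> int c * l" using \<open>l \<ge> 0\<close> by (intro mult_nonneg_nonneg) simp_all
    have "xb = int x + (int c * int m * k + int b * l)" using dx unfolding dx_def by linarith
    moreover have "yb = int y + (int b * k + int c * l)" using dy unfolding dy_def by linarith
    moreover have "int x \<ge> 0" "int y \<ge> 0" by simp_all
    ultimately have "xb \<ge> 0" "yb \<ge> 0" using p1 p2 p3 p4 by linarith+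
    thus "xb \<ge> 0 \<and> yb \<ge> 0" by (rule conjI)
  next
    assume h0: "xb \<ge> 0 \<and> yb \<ge> 0"
    have x0: "xb \<ge> 0" and y0: "yb \<ge> 0" using h0 by simp_all
    show "\<exists>x y z w :: nat.
            real a * ?s * (real x + real y * ?s)
            + (real b + real c * ?s) * (real z + real w * ?s)
            = real_of_int A + real_of_int B * ?s"
    proof (intro exI)
      show "real a * ?s * (real (nat xb) + real (nat yb) * ?s)
            + (real b + real c * ?s) * (real (nat zb) + real (nat wb) * ?s)
            = real_of_int A + real_of_int B * ?s"
        unfolding of_nat_nat[OF x0] of_nat_nat[OF y0] of_nat_nat[OF assms(7)] of_nat_nat[OF assms(9)]
        by (rule assms(11))
    qed
  qed
qed

end
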